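(* Let $N$ be a finite-dimensional Hilbert space, let $S$ be the operator in $\ell_2(\mathbb{Z},N)$ defined below, and let $J$ be a fundamental symmetry in $\ell_2(\mathbb{Z},N)$ commuting with $S$, of the form $(J(x_k))_k=J_-x_k$ for $k\le0$ and $(J(x_k))_k=J_+x_k$ for $k\ge1$ with fundamental symmetries $J_\pm$ in $N$. Then there exist self-adjoint extensions of $S$ commuting with $J$ if and only if $\dim[(I-J_+)N]=\dim[(I-J_-)N]$.
   Context: Let $A$ be the operator in $\ell_2(\mathbb{Z},N)$ with domain consisting of all sequences $f=(f_k)_{k\in\mathbb{Z}}$ of the form $f_k=x_{k-1}-x_k$ with $(x_k)\in\ell_2(\mathbb{Z},N)$, acting by $(Af)_k=i(x_{k-1}+x_k)$; $S$ is the restriction of $A$ to those $f$ with $x_0=0$. A fundamental symmetry is a bounded $J$ with $J=J^*$, $J^2=I$. An operator $B$ commutes with $J$ if $J\mathcal{D}(B)\subset\mathcal{D}(B)$ and $JBu=BJu$ for $u\in\mathcal{D}(B)$. *)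

theory Defs
  imports "HOL-Analysis.Analysis"
begin

text \<open>The finite-dimensional Hilbert space N is modelled as complex^'n ('n a finite type),
  with the standard inner product. Operators (possibly unbounded) are represented by their graphs.\<close>

definition innerN :: "complex^'n \<Rightarrow> complex^'n \<Rightarrow> complex" where
  "innerN x y = (\<Sum>i\<in>UNIV. x$i * cnj (y$i))"

definition l2Z :: "(int \<Rightarrow> complex^'n) set" where
  "l2Z = {x. (\<lambda>k. (norm (x k))^2) summable_on UNIV}"

definition l2_inner :: "(int \<Rightarrow> complex^'n) \<Rightarrow> (int \<Rightarrow> complex^'n) \<Rightarrow> complex" where
  "l2_inner f g = (\<Sum>\<^sub>\<infinity>k. innerN (f k) (g k))"

definition A_graph :: "((int \<Rightarrow> complex^'n) \<times> (int \<Rightarrow> complex^'n)) set" where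
  "A_graph = {((\<lambda>k. x (k - 1) - x k), (\<lambda>k. \<i> *s (x (k - 1) + x k))) | x. x \<in> l2Z}"

definition S_graph :: "((int \<Rightarrow> complex^'n) \<times> (int \<Rightarrow> complex^'n)) set" where
  "S_graph = {((\<lambda>k. x (k - 1) - x k), (\<lambda>k. \<i> *s (x (k - 1) + x k))) | x. x \<in> l2Z \<and> x 0 = 0}"

definition adjoint_graph ::
  "((int \<Rightarrow> complex^'n) \<times> (int \<Rightarrow> complex^'n)) set \<Rightarrow> ((int \<Rightarrow> complex^'n) \<times> (int \<Rightarrow> complex^'n)) set" where
  "adjoint_graph T = {(g, h). g \<in> l2Z \<and> h \<in> l2Z \<and>
      (\<forall>(f, Tf) \<in> T. l2_inner Tf g = l2_inner f h)}"

definition single_valued_graph :: "('a \<times> 'b) set \<Rightarrow> bool" where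
  "single_valued_graph T \<longleftrightarrow> (\<forall>f g g'. (f, g) \<in> T \<longrightarrow> (f, g') \<in> T \<longrightarrow> g = g')"

definition self_adjoint_graph ::
  "((int \<Rightarrow> complex^'n) \<times> (int \<Rightarrow> complex^'n)) set \<Rightarrow> bool" where
  "self_adjoint_graph T \<longleftrightarrow> single_valued_graph T \<and> T = adjoint_graph T"

definition commutes_graph :: "('a \<Rightarrow> 'a) \<Rightarrow> ('a \<times> 'a) set \<Rightarrow> bool" where
  "commutes_graph J B \<longleftrightarrow> (\<forall>(u, v) \<in> B. (J u, J v) \<in> B)"

definition adjoint_mat :: "complex^'n^'n \<Rightarrow> complex^'n^'n" where
  "adjoint_mat M = (\<chi> i j. cnj (M$j$i))"

definition fund_sym_N :: "complex^'n^'n \<Rightarrow> bool" where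
  "fund_sym_N M \<longleftrightarrow> adjoint_mat M = M \<and> M ** M = mat 1"

definition J_op :: "complex^'n^'n \<Rightarrow> complex^'n^'n \<Rightarrow> (int \<Rightarrow> complex^'n) \<Rightarrow> (int \<Rightarrow> complex^'n)" where
  "J_op Jm Jp x = (\<lambda>k. if k \<le> 0 then Jm *v x k else Jp *v x k)"

end

theory Submission
  imports Defs
begin

lemma innerN_add_left: "innerN (x + y) z = innerN x z + innerN y z"
  by (simp add: innerN_def distrib_right sum.distrib)
lemma innerN_add_right: "innerN x (y + z) = innerN x y + innerN x z"
  by (simp add: innerN_def distrib_left sum.distrib)
lemma innerN_diff_left: "innerN (x - y) z = innerN x z - innerN y z"
  by (simp add: innerN_def left_diff_distrib sum_subtractf)
lemma innerN_diff_right: "innerN x (y - z) = innerN x y - innerN x z"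
  by (simp add: innerN_def right_diff_distrib sum_subtractf)
lemma innerN_scale_left: "innerN (c *s x) y = c * innerN x y"
  by (simp add: innerN_def sum_distrib_left mult.assoc)
lemma innerN_scale_right: "innerN x (c *s y) = cnj c * innerN x y"
  by (simp add: innerN_def sum_distrib_left mult_ac)
lemma innerN_zero_left[simp]: "innerN 0 y = 0" by (simp add: innerN_def)
lemma innerN_zero_right[simp]: "innerN x 0 = 0" by (simp add: innerN_def)
lemma innerN_minus_left: "innerN (- x) y = - innerN x y"
  by (simp add: innerN_def sum_negf)
lemma innerN_minus_right: "innerN x (- y) = - innerN x y"
  by (simp add: innerN_def sum_negf)
lemma innerN_cnj: "cnj (innerN x y) = innerN y x"
  by (simp add: innerN_def mult.commute)
lemma innerN_sum_left: "innerN (\<Sum>e\<in>E. f e) y = (\<Sum>e\<in>E. innerN (f e) y)"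
  by (induction E rule: infinite_finite_induct) (auto simp: innerN_add_left)
lemma innerN_sum_right: "innerN y (\<Sum>e\<in>E. f e) = (\<Sum>e\<in>E. innerN y (f e))"
  by (induction E rule: infinite_finite_induct) (auto simp: innerN_add_right)

lemma norm_vec_sq: "(norm (x::complex^'n))^2 = (\<Sum>i\<in>UNIV. (norm (x$i))^2)"
  by (simp add: norm_vec_def L2_set_def sum_nonneg)

lemma innerN_self: "innerN x x = of_real ((norm x)^2)"
proof -
  have "innerN x x = (\<Sum>i\<in>UNIV. of_real ((norm (x$i))^2))"
    unfolding innerN_def by (intro sum.cong refl) (metis complex_norm_square of_real_power)
  also have "\<dots> = of_real (\<Sum>i\<in>UNIV. (norm (x$i))^2)" by simp
  finally show ?thesis by (simp add: norm_vec_sq)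
qed

lemma innerN_self_eq_0[simp]: "innerN x x = 0 \<longleftrightarrow> x = 0"
  by (simp add: innerN_self)

lemma innerN_ext: assumes "\<And>v. innerN v a = innerN v b" shows "a = b"
proof -
  have "innerN (a - b) (a - b) = 0" using assms[of "a - b"] by (simp add: innerN_diff_right)
  thus ?thesis by simp
qed

lemma innerN_le: "norm (innerN x y) \<le> ((norm x)^2 + (norm y)^2) / 2"
proof -
  have "norm (innerN x y) \<le> (\<Sum>i\<in>UNIV. norm (x$i * cnj (y$i)))"
    unfolding innerN_def by (rule norm_sum)
  also have "\<dots> \<le> (\<Sum>i\<in>UNIV. ((norm (x$i))^2 + (norm (y$i))^2)/2)"
  proof (intro sum_mono)
    fix i
    have "0 \<le> (norm (x$i) - norm (y$i))^2" by simp
    thus "norm (x$i * cnj (y$i)) \<le> ((norm (x$i))^2 + (norm (y$i))^2)/2"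
      by (simp add: norm_mult power2_eq_square algebra_simps)
  qed
  also have "\<dots> = ((norm x)^2 + (norm y)^2) / 2"
    unfolding norm_vec_sq by (simp add: sum.distrib flip: sum_divide_distrib)
  finally show ?thesis .
qed

lemma innerN_mat: "innerN (M *v x) y = innerN x (adjoint_mat M *v y)"
  by (simp add: innerN_def matrix_vector_mult_def adjoint_mat_def sum_distrib_left
      sum_distrib_right mult_ac) (rule sum.swap)

lemma innerN_axis: "innerN x (axis i 1) = x $ i"
  by (simp add: innerN_def axis_def if_distrib cong: if_cong)


lemma l2Z_iff: "x \<in> l2Z \<longleftrightarrow> (\<lambda>k. (norm (x k))^2) summable_on UNIV"
  by (simp add: l2Z_def)

lemma l2_le: assumes "x \<in> l2Z" "\<And>k. norm (y k) \<le> c * norm (x k)" shows "y \<in> l2Z"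
proof -
  have "(\<lambda>k. c^2 * (norm (x k))^2) summable_on UNIV"
    using assms(1) by (intro summable_on_cmult_right) (simp add: l2Z_iff)
  moreover have "(norm (y k))^2 \<le> c^2 * (norm (x k))^2" for k
  proof -
    have "norm (y k) \<le> \<bar>c\<bar> * norm (x k)" using assms(2)[of k]
      by (meson abs_ge_self mult_right_mono norm_ge_zero order_trans)
    hence "(norm (y k))^2 \<le> (\<bar>c\<bar> * norm (x k))^2" by (intro power_mono) auto
    thus ?thesis by (simp add: power_mult_distrib)
  qed
  ultimately show ?thesis unfolding l2Z_iff
    by (rule summable_on_comparison_test) auto
qed

lemma l2_add: assumes "x \<in> l2Z" "y \<in> l2Z" shows "(\<lambda>k. x k + y k) \<in> l2Z"
proof -
  have "(\<lambda>k. 2 * (norm (x k))^2 + 2 * (norm (y k))^2) summable_on UNIV"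
    using assms by (intro summable_on_add summable_on_cmult_right) (auto simp: l2Z_iff)
  moreover have "(norm (x k + y k))^2 \<le> 2 * (norm (x k))^2 + 2 * (norm (y k))^2" for k
  proof -
    have "norm (x k + y k) \<le> norm (x k) + norm (y k)" by (rule norm_triangle_ineq)
    hence "(norm (x k + y k))^2 \<le> (norm (x k) + norm (y k))^2" by (intro power_mono) auto
    also have "\<dots> \<le> 2 * (norm (x k))^2 + 2 * (norm (y k))^2"
      using sum_squares_bound[of "norm (x k)" "norm (y k)"] by (simp add: power2_eq_square algebra_simps)
    finally show ?thesis .
  qed
  ultimately show ?thesis unfolding l2Z_iff
    by (rule summable_on_comparison_test) auto
qed

lemma norm_smult_vec: "norm (c *s (x::complex^'n)) = norm c * norm x"
proof -
  have "(norm (c *s x))^2 = (norm c * norm x)^2"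
    by (simp add: norm_vec_sq power_mult_distrib norm_mult sum_distrib_left)
  thus ?thesis by (simp add: power2_eq_iff_nonneg)
qed

lemma l2_scale: assumes "x \<in> l2Z" shows "(\<lambda>k. c *s x k) \<in> l2Z"
  by (rule l2_le[OF assms, of _ "norm c"]) (simp add: norm_smult_vec)

lemma l2_minus: assumes "x \<in> l2Z" shows "(\<lambda>k. - x k) \<in> l2Z"
  by (rule l2_le[OF assms, of _ 1]) simp

lemma l2_diff: assumes "x \<in> l2Z" "y \<in> l2Z" shows "(\<lambda>k. x k - y k) \<in> l2Z"
  using l2_add[OF assms(1) l2_minus[OF assms(2)]] by simp

lemma l2_zero: "(\<lambda>k. 0) \<in> l2Z"
  by (simp add: l2Z_iff)

lemma l2_finite: assumes "finite F" "\<And>k. k \<notin> F \<Longrightarrow> x k = 0" shows "x \<in> l2Z"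
proof -
  have "(\<lambda>k. (norm (x k))^2) summable_on F" using assms(1) by simp
  thus ?thesis unfolding l2Z_iff
    by (subst summable_on_cong_neutral[where T=F and g="\<lambda>k. (norm (x k))^2"]) (auto simp: assms(2))
qed

lemma l2_delta: "(\<lambda>k. if k = m then v else 0) \<in> l2Z"
  by (rule l2_finite[of "{m}"]) auto

lemma l2_shift: assumes "x \<in> l2Z" shows "(\<lambda>k. x (k + c)) \<in> l2Z"
proof -
  have b: "bij_betw (\<lambda>k. k + c) UNIV UNIV"
    by (rule bij_betwI[where g="\<lambda>k. k - c"]) auto
  show ?thesis using assms unfolding l2Z_iff
    using summable_on_reindex_bij_betw[OF b, of "\<lambda>k. (norm (x k))^2"] by simp
qed

lemma l2_update: assumes "x \<in> l2Z" shows "(\<lambda>k. if k = m then v else x k) \<in> l2Z"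
proof -
  have "(\<lambda>k. if k = m then 0 else x k) \<in> l2Z"
    by (rule l2_le[OF assms, of _ 1]) auto
  from l2_add[OF this l2_delta[of m v]] show ?thesis
    by (simp add: if_distrib cong: if_cong)
qed

lemma l2_inner_summable: assumes "x \<in> l2Z" "y \<in> l2Z"
  shows "(\<lambda>k. innerN (x k) (y k)) summable_on UNIV"
proof -
  have "(\<lambda>k. ((norm (x k))^2 + (norm (y k))^2) * (1/2)) summable_on UNIV"
    using assms by (intro summable_on_add summable_on_cmult_left) (auto simp: l2Z_iff)
  hence "(\<lambda>k. ((norm (x k))^2 + (norm (y k))^2) / 2) summable_on UNIV" by simp
  hence "(\<lambda>k. norm (innerN (x k) (y k))) summable_on UNIV"
    by (rule summable_on_comparison_test) (use innerN_le in auto)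
  thus ?thesis by (simp add: summable_on_iff_abs_summable_on_complex)
qed

lemma l2_inner_add_right: assumes "f \<in> l2Z" "x \<in> l2Z" "y \<in> l2Z"
  shows "l2_inner f (\<lambda>k. x k + y k) = l2_inner f x + l2_inner f y"
  unfolding l2_inner_def innerN_add_right
  by (rule infsum_add; rule l2_inner_summable; fact)

lemma l2_inner_add_left: assumes "f \<in> l2Z" "x \<in> l2Z" "y \<in> l2Z"
  shows "l2_inner (\<lambda>k. x k + y k) f = l2_inner x f + l2_inner y f"
  unfolding l2_inner_def innerN_add_left
  by (rule infsum_add; rule l2_inner_summable; fact)

lemma l2_inner_scale_right: "l2_inner f (\<lambda>k. c *s x k) = cnj c * l2_inner f x"
  unfolding l2_inner_def innerN_scale_right
  by (cases "c = 0") (auto intro: infsum_cmult_right')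

lemma l2_inner_scale_left: "l2_inner (\<lambda>k. c *s x k) f = c * l2_inner x f"
  unfolding l2_inner_def innerN_scale_left
  by (cases "c = 0") (auto intro: infsum_cmult_right')

lemma l2_inner_minus_right: "l2_inner f (\<lambda>k. - y k) = - l2_inner f y"
  unfolding l2_inner_def innerN_minus_right by (rule infsum_uminus)
lemma l2_inner_minus_left: "l2_inner (\<lambda>k. - y k) f = - l2_inner y f"
  unfolding l2_inner_def innerN_minus_left by (rule infsum_uminus)

lemma l2_inner_diff_right: assumes "f \<in> l2Z" "x \<in> l2Z" "y \<in> l2Z"
  shows "l2_inner f (\<lambda>k. x k - y k) = l2_inner f x - l2_inner f y"
proof -
  have "l2_inner f (\<lambda>k. x k - y k) = l2_inner f (\<lambda>k. x k + (-1) *s y k)"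
    by (simp add: vector_smult_lneg)
  also have "\<dots> = l2_inner f x + l2_inner f (\<lambda>k. (-1) *s y k)"
    by (rule l2_inner_add_right) (use assms l2_scale l2_minus in auto)
  finally show ?thesis by (simp add: l2_inner_minus_right)
qed

lemma l2_inner_diff_left: assumes "f \<in> l2Z" "x \<in> l2Z" "y \<in> l2Z"
  shows "l2_inner (\<lambda>k. x k - y k) f = l2_inner x f - l2_inner y f"
proof -
  have "l2_inner (\<lambda>k. x k - y k) f = l2_inner (\<lambda>k. x k + (-1) *s y k) f"
    by (simp add: vector_smult_lneg)
  also have "\<dots> = l2_inner x f + l2_inner (\<lambda>k. (-1) *s y k) f"
    by (rule l2_inner_add_left) (use assms l2_scale l2_minus in auto)
  finally show ?thesis by (simp add: l2_inner_minus_left)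
qed

lemma l2_inner_finite: assumes "finite F" "\<And>k. k \<notin> F \<Longrightarrow> innerN (x k) (y k) = 0"
  shows "l2_inner x y = (\<Sum>k\<in>F. innerN (x k) (y k))"
proof -
  have "l2_inner x y = infsum (\<lambda>k. innerN (x k) (y k)) F"
    unfolding l2_inner_def by (rule infsum_cong_neutral) (auto simp: assms(2))
  thus ?thesis using assms(1) by simp
qed

lemma l2_inner_shift: "l2_inner (\<lambda>k. x (k - 1)) (\<lambda>k. y (k - 1)) = l2_inner x y"
proof -
  have b: "bij_betw (\<lambda>k. k - 1) UNIV (UNIV::int set)"
    by (rule bij_betwI[where g="\<lambda>k. k + 1"]) auto
  show ?thesis unfolding l2_inner_def
    using infsum_reindex_bij_betw[OF b, of "\<lambda>k. innerN (x k) (y k)"] by simp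
qed

lemma l2_const_zero: assumes "x \<in> l2Z" "\<And>j. j \<in> (A::int set) \<Longrightarrow> x j = c" "infinite A"
  shows "c = 0"
proof (rule ccontr)
  assume "c \<noteq> 0"
  hence t: "(norm c)^2 > 0" by simp
  let ?B = "infsum (\<lambda>k. (norm (x k))^2) UNIV"
  have le: "real (card F) * (norm c)^2 \<le> ?B" if "finite F" "F \<subseteq> A" for F
  proof -
    have "(\<Sum>k\<in>F. (norm (x k))^2) \<le> ?B"
      by (rule finite_sum_le_infsum) (use assms(1) that in \<open>auto simp: l2Z_iff\<close>)
    moreover have "(\<Sum>k\<in>F. (norm (x k))^2) = (\<Sum>k\<in>F. (norm c)^2)"
      by (intro sum.cong) (use that assms(2) in auto)
    ultimately show ?thesis by simp
  qed
  obtain n :: nat where n: "real n > ?B / (norm c)^2" using reals_Archimedean2 by blast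
  obtain F where F: "F \<subseteq> A" "finite F" "card F = n"
    using infinite_arbitrarily_large[OF assms(3)] by blast
  have "real n * (norm c)^2 \<le> ?B" using le[OF F(2,1)] F(3) by simp
  with n t show False by (simp add: field_simps)
qed

definition orthonormal :: "(complex^'n) set \<Rightarrow> bool" where
  "orthonormal E \<longleftrightarrow> (\<forall>e\<in>E. innerN e e = 1) \<and> (\<forall>e\<in>E. \<forall>e'\<in>E. e \<noteq> e' \<longrightarrow> innerN e e' = 0)"

lemma on_coeff: assumes "finite E" "orthonormal E" "e' \<in> E"
  shows "innerN (\<Sum>e\<in>E. c e *s e) e' = c e'"
proof -
  have "innerN (\<Sum>e\<in>E. c e *s e) e' = (\<Sum>e\<in>E. c e * innerN e e')"
    by (simp add: innerN_sum_left innerN_scale_left)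
  also have "\<dots> = (\<Sum>e\<in>E. if e = e' then c e else 0)"
    using assms(2,3) unfolding orthonormal_def by (intro sum.cong) auto
  also have "\<dots> = c e'" using assms(1,3) by simp
  finally show ?thesis .
qed

lemma on_expand: assumes "finite E" "orthonormal E" "v \<in> vec.span E"
  shows "v = (\<Sum>e\<in>E. innerN v e *s e)"
proof -
  obtain u where u: "v = (\<Sum>e\<in>E. u e *s e)"
    using assms(3) vec.span_finite[OF assms(1)] by auto
  have "innerN v e = u e" if "e \<in> E" for e using on_coeff[OF assms(1,2) that] u by simp
  hence "(\<Sum>e\<in>E. innerN v e *s e) = (\<Sum>e\<in>E. u e *s e)" by (intro sum.cong) auto
  thus ?thesis using u by simp
qed

lemma on_perp: assumes "finite E" "orthonormal E" "e' \<in> E"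
  shows "innerN (v - (\<Sum>e\<in>E. innerN v e *s e)) e' = 0"
  using on_coeff[OF assms] by (simp add: innerN_diff_left)

lemma on_perp_span: assumes "finite E" "orthonormal E" "d \<in> vec.span E"
  shows "innerN (v - (\<Sum>e\<in>E. innerN v e *s e)) d = 0"
proof -
  have "d = (\<Sum>e\<in>E. innerN d e *s e)" by (rule on_expand[OF assms])
  hence "innerN (v - (\<Sum>e\<in>E. innerN v e *s e)) d =
     (\<Sum>e'\<in>E. cnj (innerN d e') * innerN (v - (\<Sum>e\<in>E. innerN v e *s e)) e')"
    by (metis (no_types, lifting) innerN_scale_right innerN_sum_right sum.cong)
  also have "\<dots> = 0" using on_perp[OF assms(1,2)] by simp
  finally show ?thesis .
qed

lemma on_independent: assumes "finite E" "orthonormal E" shows "vec.independent E"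
  unfolding vec.independent_explicit
proof (intro conjI allI impI ballI)
  fix c v assume "(\<Sum>v\<in>E. c v *s v) = 0" "v \<in> E"
  thus "c v = 0" using on_coeff[OF assms \<open>v \<in> E\<close>, of c] by simp
qed (fact assms)

lemma gram_schmidt: assumes "finite B"
  shows "\<exists>E. finite E \<and> orthonormal E \<and> vec.span E = vec.span B"
  using assms
proof (induction B rule: finite_induct)
  case empty
  show ?case by (rule exI[of _ "{}"]) (simp add: orthonormal_def)
next
  case (insert b B)
  then obtain E where E: "finite E" "orthonormal E" "vec.span E = vec.span B" by blast
  have sp: "vec.span (insert b E) = vec.span (insert b B)"
    by (simp add: vec.span_insert E(3))
  define r where "r = b - (\<Sum>e\<in>E. innerN b e *s e)"
  have sumE: "(\<Sum>e\<in>E. innerN b e *s e) \<in> vec.span E"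
    by (intro vec.span_sum vec.span_scale vec.span_base)
  show ?case
  proof (cases "r = 0")
    case True
    hence "b \<in> vec.span E" using sumE unfolding r_def by simp
    hence "vec.span (insert b E) = vec.span E" by (rule vec.span_redundant)
    thus ?thesis using E sp by auto
  next
    case False
    define e0 where "e0 = complex_of_real (1 / norm r) *s r"
    have nr: "norm r > 0" using False by simp
    have e0e0: "innerN e0 e0 = 1"
    proof -
      have "innerN e0 e0 = complex_of_real (1/norm r) * cnj (complex_of_real (1/norm r)) * innerN r r"
        unfolding e0_def innerN_scale_left innerN_scale_right by simp
      also have "\<dots> = 1" unfolding innerN_self using nr by (simp add: power2_eq_square field_simps)
      finally show ?thesis .
    qed
    have perp: "innerN e0 e = 0" if "e \<in> E" for e
      using on_perp[OF E(1,2) that, of b] unfolding e0_def innerN_scale_left r_def by (simp only: mult_zero_right)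
    have notin: "e0 \<notin> E" using perp e0e0 by auto
    have on: "orthonormal (insert e0 E)"
    proof -
      have "innerN e e0 = 0" if "e \<in> E" for e
        using perp[OF that] innerN_cnj[of e0 e] by simp
      thus ?thesis using E(2) e0e0 perp unfolding orthonormal_def by auto
    qed
    have "vec.span (insert e0 E) = vec.span (insert b E)"
    proof (rule antisym)
      have "e0 \<in> vec.span (insert b E)"
        unfolding e0_def r_def
        by (intro vec.span_scale vec.span_diff vec.span_sum vec.span_base) auto
      thus "vec.span (insert e0 E) \<subseteq> vec.span (insert b E)"
        by (intro vec.span_minimal) (auto intro: vec.span_base)
    next
      have "b = complex_of_real (norm r) *s e0 + (\<Sum>e\<in>E. innerN b e *s e)"
        using nr by (simp add: e0_def r_def vector_smult_assoc)
      also have "\<dots> \<in> vec.span (insert e0 E)"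
        by (intro vec.span_add vec.span_scale vec.span_sum vec.span_base) auto
      finally show "vec.span (insert b E) \<subseteq> vec.span (insert e0 E)"
        by (intro vec.span_minimal) (auto intro: vec.span_base)
    qed
    thus ?thesis using on E(1) sp by (intro exI[of _ "insert e0 E"]) auto
  qed
qed

lemma on_basis: assumes "vec.subspace V"
  obtains E where "finite E" "orthonormal E" "vec.span E = V" "card E = vec.dim V"
proof -
  obtain B where B: "B \<subseteq> V" "vec.independent B" "V \<subseteq> vec.span B" "card B = vec.dim V"
    by (rule vec.basis_exists)
  have fB: "finite B" using B(2) by (rule vec.finiteI_independent)
  obtain E where E: "finite E" "orthonormal E" "vec.span E = vec.span B"
    using gram_schmidt[OF fB] by blast
  have "vec.span B = V" using vec.span_minimal[OF B(1) assms] B(3) by auto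
  hence spE: "vec.span E = V" using E(3) by simp
  have "card E = vec.dim E" using on_independent[OF E(1,2)] by (simp add: vec.dim_eq_card_independent)
  also have "\<dots> = vec.dim V" by (metis spE vec.dim_span)
  finally show ?thesis using that E spE by blast
qed

lemma perp_full: assumes "vec.subspace D" "\<And>a. (\<And>d. d \<in> D \<Longrightarrow> innerN a d = 0) \<Longrightarrow> a = 0"
  shows "D = UNIV"
proof -
  obtain E where E: "finite E" "orthonormal E" "vec.span E = D" by (rule on_basis[OF assms(1)])
  have "v \<in> D" for v
  proof -
    have "v - (\<Sum>e\<in>E. innerN v e *s e) = 0"
      using assms(2) on_perp_span[OF E(1,2)] E(3) by blast
    hence "v = (\<Sum>e\<in>E. innerN v e *s e)" by simp
    also have "\<dots> \<in> vec.span E" by (intro vec.span_sum vec.span_scale vec.span_base)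
    finally show ?thesis using E(3) by simp
  qed
  thus ?thesis by auto
qed

lemma fs_invol: assumes "fund_sym_N M" shows "M *v (M *v v) = v"
  using assms by (simp add: fund_sym_N_def matrix_vector_mul_assoc)

lemma fs_sa: assumes "fund_sym_N M" shows "innerN (M *v x) y = innerN x (M *v y)"
  using assms by (simp add: fund_sym_N_def innerN_mat)

lemma fs_norm: assumes "fund_sym_N M" shows "norm (M *v v) = norm v"
proof -
  have "innerN (M *v v) (M *v v) = innerN v v" using fs_sa[OF assms] fs_invol[OF assms] by simp
  hence "complex_of_real ((norm (M *v v))^2) = complex_of_real ((norm v)^2)" unfolding innerN_self .
  hence "(norm (M *v v))^2 = (norm v)^2" by (simp only: of_real_eq_iff)
  thus ?thesis by (simp add: power2_eq_iff_nonneg)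
qed

lemma range_minus: assumes "fund_sym_N M"
  shows "range (\<lambda>v. (mat 1 - M) *v v) = {u. M *v u = - u}"
proof (intro set_eqI iffI)
  fix u assume "u \<in> range (\<lambda>v. (mat 1 - M) *v v)"
  then obtain v where "u = v - M *v v" by (auto simp: matrix_vector_mult_diff_rdistrib)
  thus "u \<in> {u. M *v u = - u}" using fs_invol[OF assms] by (simp add: vec.diff)
next
  fix u assume "u \<in> {u. M *v u = - u}"
  hence "(mat 1 - M) *v ((1/2) *s u) = u"
    by (simp add: matrix_vector_mult_diff_rdistrib vector_scalar_commute vec_eq_iff)
  thus "u \<in> range (\<lambda>v. (mat 1 - M) *v v)" by (metis rangeI)
qed

lemma subspace_eig: "vec.subspace {u. M *v u = c *s u}"
  unfolding vec.subspace_def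
proof (intro conjI ballI allI)
  show "0 \<in> {u. M *v u = c *s u}" by simp
next
  fix x y assume "x \<in> {u. M *v u = c *s u}" "y \<in> {u. M *v u = c *s u}"
  thus "x + y \<in> {u. M *v u = c *s u}" by (simp add: vec.add vec.scale_right_distrib)
next
  fix d x assume "x \<in> {u. M *v u = c *s u}"
  thus "d *s x \<in> {u. M *v u = c *s u}" by (simp add: vector_scalar_commute vector_smult_assoc mult.commute)
qed

lemma eig_perp: assumes "fund_sym_N M" "M *v u = u" "M *v w = - w" shows "innerN u w = 0"
proof -
  have "innerN u w = innerN (M *v u) w" using assms by simp
  also have "\<dots> = innerN u (M *v w)" by (rule fs_sa[OF assms(1)])
  also have "\<dots> = - innerN u w" using assms by (simp add: innerN_minus_right)
  finally show ?thesis by simp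
qed

lemma eig_decomp: assumes "fund_sym_N M"
  shows "v = (1/2) *s (v + M *v v) + (1/2) *s (v - M *v v)"
    "M *v ((1/2) *s (v + M *v v)) = (1/2) *s (v + M *v v)"
    "M *v ((1/2) *s (v - M *v v)) = - ((1/2) *s (v - M *v v))"
proof -
  show "v = (1/2) *s (v + M *v v) + (1/2) *s (v - M *v v)"
    by (simp add: vec_eq_iff field_simps)
  show "M *v ((1/2) *s (v + M *v v)) = (1/2) *s (v + M *v v)"
    by (simp only: vector_scalar_commute vec.add fs_invol[OF assms] add.commute)
  have "M *v ((1/2) *s (v - M *v v)) = (1/2) *s (M *v v - v)"
    by (simp only: vector_scalar_commute vec.diff fs_invol[OF assms])
  also have "\<dots> = - ((1/2) *s (v - M *v v))" by (simp add: vec_eq_iff field_simps)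
  finally show "M *v ((1/2) *s (v - M *v v)) = - ((1/2) *s (v - M *v v))" .
qed

lemma full_onb:
  assumes M: "fund_sym_N M"
  obtains Ap Am where "finite Ap" "finite Am" "orthonormal (Ap \<union> Am)" "Ap \<inter> Am = {}"
    "\<And>e. e \<in> Ap \<Longrightarrow> M *v e = e" "\<And>e. e \<in> Am \<Longrightarrow> M *v e = - e"
    "vec.span (Ap \<union> Am) = UNIV" "card Am = vec.dim {u. M *v u = - u}"
proof -
  have s1: "vec.subspace {u. M *v u = (1::complex) *s u}" by (rule subspace_eig)
  have s2: "vec.subspace {u. M *v u = (-1::complex) *s u}" by (rule subspace_eig)
  obtain Ap where Ap: "finite Ap" "orthonormal Ap" "vec.span Ap = {u. M *v u = u}"
    using on_basis[OF s1] by auto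
  obtain Am where Am: "finite Am" "orthonormal Am" "vec.span Am = {u. M *v u = - u}"
     "card Am = vec.dim {u. M *v u = - u}"
    using on_basis[OF s2] by (auto simp: vector_smult_lneg)
  have inP: "M *v e = e" if "e \<in> Ap" for e using Ap(3) vec.span_base[OF that] by auto
  have inM: "M *v e = - e" if "e \<in> Am" for e using Am(3) vec.span_base[OF that] by auto
  have perp: "innerN e e' = 0" "innerN e' e = 0" if "e \<in> Ap" "e' \<in> Am" for e e'
    using eig_perp[OF M inP[OF that(1)] inM[OF that(2)]] innerN_cnj[of e e'] by auto
  have on: "orthonormal (Ap \<union> Am)"
    unfolding orthonormal_def
  proof (intro conjI ballI impI)
    fix e assume "e \<in> Ap \<union> Am" thus "innerN e e = 1" using Ap(2) Am(2) unfolding orthonormal_def by auto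
  next
    fix e e' assume "e \<in> Ap \<union> Am" "e' \<in> Ap \<union> Am" "e \<noteq> e'"
    thus "innerN e e' = 0" using Ap(2) Am(2) perp unfolding orthonormal_def by auto
  qed
  have disj: "Ap \<inter> Am = {}"
  proof (rule ccontr)
    assume "Ap \<inter> Am \<noteq> {}" then obtain e where "e \<in> Ap" "e \<in> Am" by auto
    with perp(1)[of e e] Ap(2) show False unfolding orthonormal_def by auto
  qed
  have "v \<in> vec.span (Ap \<union> Am)" for v
  proof -
    have "(1/2) *s (v + M *v v) \<in> vec.span Ap" using Ap(3) eig_decomp(2)[OF M] by auto
    hence a: "(1/2) *s (v + M *v v) \<in> vec.span (Ap \<union> Am)" using vec.span_mono[of Ap "Ap \<union> Am"] by blast
    have "(1/2) *s (v - M *v v) \<in> vec.span Am" using Am(3) eig_decomp(3)[OF M] by auto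
    hence b: "(1/2) *s (v - M *v v) \<in> vec.span (Ap \<union> Am)" using vec.span_mono[of Am "Ap \<union> Am"] by blast
    show ?thesis using vec.span_add[OF a b] eig_decomp(1)[OF M, of v] by simp
  qed
  hence "vec.span (Ap \<union> Am) = UNIV" by auto
  show ?thesis by (rule that[OF Ap(1) Am(1) on disj inP inM \<open>vec.span (Ap \<union> Am) = UNIV\<close> Am(4)])
qed

lemma card_onb_UNIV: fixes E :: "(complex^'n) set" assumes "finite E" "orthonormal E" "vec.span E = UNIV"
  shows "card E = vec.dim (UNIV :: (complex^'n) set)"
proof -
  have "card E = vec.dim E" using on_independent[OF assms(1,2)] by (simp add: vec.dim_eq_card_independent)
  also have "\<dots> = vec.dim (vec.span E)" by simp
  finally show ?thesis using assms(3) by simp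
qed

lemma exists_Phi:
  fixes Jm Jp :: "complex^'n^'n"
  assumes Jm: "fund_sym_N Jm" and Jp: "fund_sym_N Jp"
    and dims: "vec.dim {u. Jp *v u = - u} = vec.dim {u. Jm *v u = - u}"
  shows "\<exists>(Phi::complex^'n \<Rightarrow> complex^'n) Phis. (\<forall>a b. innerN (Phi a) (Phi b) = innerN a b)
     \<and> (\<forall>v p. innerN (Phi v) p = innerN v (Phis p)) \<and> (\<forall>p. Phi (Phis p) = p)
     \<and> (\<forall>v. Phi (Jm *v v) = Jp *v Phi v) \<and> (\<forall>c v. Phi (c *s v) = c *s Phi v)"
proof -
  obtain Pm Mm where m: "finite Pm" "finite Mm" "orthonormal (Pm \<union> Mm)" "Pm \<inter> Mm = {}"
    "\<And>e. e \<in> Pm \<Longrightarrow> Jm *v e = e" "\<And>e. e \<in> Mm \<Longrightarrow> Jm *v e = - e"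
    "vec.span (Pm \<union> Mm) = UNIV" "card Mm = vec.dim {u. Jm *v u = - u}"
    using full_onb[OF Jm] by blast
  obtain Pp Mp where p: "finite Pp" "finite Mp" "orthonormal (Pp \<union> Mp)" "Pp \<inter> Mp = {}"
    "\<And>e. e \<in> Pp \<Longrightarrow> Jp *v e = e" "\<And>e. e \<in> Mp \<Longrightarrow> Jp *v e = - e"
    "vec.span (Pp \<union> Mp) = UNIV" "card Mp = vec.dim {u. Jp *v u = - u}"
    using full_onb[OF Jp] by blast
  define A where "A = Pm \<union> Mm"
  define B where "B = Pp \<union> Mp"
  have fA: "finite A" and fB: "finite B" using m p by (auto simp: A_def B_def)
  have cM: "card Mm = card Mp" using m(8) p(8) dims by simp
  have "card A = card B"
    using card_onb_UNIV[OF fA m(3)[folded A_def] m(7)[folded A_def]]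
          card_onb_UNIV[OF fB p(3)[folded B_def] p(7)[folded B_def]] by simp
  hence cP: "card Pm = card Pp"
    using card_Un_disjoint[OF m(1,2,4)] card_Un_disjoint[OF p(1,2,4)] cM by (simp add: A_def B_def)
  obtain s1 where s1: "bij_betw s1 Pm Pp" using finite_same_card_bij[OF m(1) p(1) cP] by blast
  obtain s2 where s2: "bij_betw s2 Mm Mp" using finite_same_card_bij[OF m(2) p(2) cM] by blast
  define sg where "sg e = (if e \<in> Pm then s1 e else s2 e)" for e
  have b1: "bij_betw sg Pm Pp" using s1 by (rule bij_betw_cong[THEN iffD1, rotated]) (simp add: sg_def)
  have b2: "bij_betw sg Mm Mp" using s2 m(4)
    by (intro bij_betw_cong[THEN iffD1, OF _ s2]) (auto simp: sg_def)
  have bij: "bij_betw sg A B" unfolding A_def B_def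
    by (rule bij_betw_combine[OF b1 b2 p(4)])
  have sgP: "sg e \<in> Pp" if "e \<in> Pm" for e using b1 that by (auto simp: bij_betw_def)
  have sgM: "sg e \<in> Mp" if "e \<in> Mm" for e using b2 that by (auto simp: bij_betw_def)
  have onA: "orthonormal A" and onB: "orthonormal B" using m(3) p(3) by (auto simp: A_def B_def)
  have spB: "vec.span B = UNIV" using p(7) by (simp add: B_def)
  have spA: "vec.span A = UNIV" using m(7) by (simp add: A_def)
  have sgB: "sg e \<in> B" if "e \<in> A" for e using bij that by (auto simp: bij_betw_def)
  have inj: "inj_on sg A" using bij by (auto simp: bij_betw_def)
  define Phi where "Phi v = (\<Sum>e\<in>A. innerN v e *s sg e)" for v
  define Phis where "Phis p = (\<Sum>e\<in>A. innerN p (sg e) *s e)" for p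
  have key1: "innerN (Phi v) (sg e0) = innerN v e0" if e0: "e0 \<in> A" for v e0
  proof -
    have "innerN (Phi v) (sg e0) = (\<Sum>e\<in>A. innerN v e * innerN (sg e) (sg e0))"
      unfolding Phi_def by (simp add: innerN_sum_left innerN_scale_left)
    also have "\<dots> = (\<Sum>e\<in>A. if e = e0 then innerN v e else 0)"
    proof (intro sum.cong refl)
      fix e assume e: "e \<in> A"
      show "innerN v e * innerN (sg e) (sg e0) = (if e = e0 then innerN v e else 0)"
      proof (cases "e = e0")
        case True thus ?thesis using onB sgB[OF e] unfolding orthonormal_def by simp
      next
        case False
        hence "sg e \<noteq> sg e0" using inj e e0 by (auto simp: inj_on_def)
        thus ?thesis using False onB sgB[OF e] sgB[OF e0] unfolding orthonormal_def by simp
      qed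
    qed
    also have "\<dots> = innerN v e0" using fA e0 by simp
    finally show ?thesis .
  qed
  have key2: "innerN (Phis p) e0 = innerN p (sg e0)" if "e0 \<in> A" for p e0
    unfolding Phis_def by (rule on_coeff[OF fA onA that])
  have inv1: "Phi (Phis p) = p" for p
  proof -
    have "Phi (Phis p) = (\<Sum>e\<in>A. innerN p (sg e) *s sg e)"
      unfolding Phi_def by (intro sum.cong refl) (simp add: key2)
    also have "\<dots> = (\<Sum>f\<in>B. innerN p f *s f)"
      by (rule sum.reindex_bij_betw[OF bij])
    also have "\<dots> = p" using on_expand[OF fB onB, of p] spB by simp
    finally show ?thesis .
  qed
  have inv2: "Phis (Phi v) = v" for v
  proof -
    have "Phis (Phi v) = (\<Sum>e\<in>A. innerN v e *s e)"
      unfolding Phis_def by (intro sum.cong refl) (simp add: key1)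
    also have "\<dots> = v" using on_expand[OF fA onA, of v] spA by simp
    finally show ?thesis .
  qed
  have adj: "innerN (Phi v) p = innerN v (Phis p)" for v p
  proof -
    have "innerN (Phi v) p = (\<Sum>e\<in>A. innerN v e * innerN (sg e) p)"
      unfolding Phi_def by (simp add: innerN_sum_left innerN_scale_left)
    also have "\<dots> = (\<Sum>e\<in>A. cnj (innerN p (sg e)) * innerN v e)"
      by (intro sum.cong refl) (simp add: innerN_cnj mult.commute)
    also have "\<dots> = innerN v (Phis p)"
      unfolding Phis_def by (simp add: innerN_sum_right innerN_scale_right)
    finally show ?thesis .
  qed
  have iso: "innerN (Phi a) (Phi b) = innerN a b" for a b
    using adj[of a "Phi b"] inv2[of b] by simp
  have J: "Phi (Jm *v v) = Jp *v Phi v" for v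
  proof -
    have "Jp *v Phi v = (\<Sum>e\<in>A. innerN v e *s (Jp *v sg e))"
      unfolding Phi_def by (simp add: vec.sum vector_scalar_commute)
    also have "\<dots> = (\<Sum>e\<in>A. innerN (Jm *v v) e *s sg e)"
    proof (intro sum.cong refl)
      fix e assume e: "e \<in> A"
      have sw: "innerN (Jm *v v) e = innerN v (Jm *v e)" by (rule fs_sa[OF Jm])
      show "innerN v e *s (Jp *v sg e) = innerN (Jm *v v) e *s sg e"
      proof (cases "e \<in> Pm")
        case True thus ?thesis using sw m(5) p(5)[OF sgP[OF True]] by simp
      next
        case False hence "e \<in> Mm" using e by (simp add: A_def)
        thus ?thesis using sw m(6) p(6)[OF sgM] by (simp add: innerN_minus_right vector_smult_rneg vector_smult_lneg)
      qed
    qed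
    finally show ?thesis unfolding Phi_def by simp
  qed
  have hom: "Phi (c *s v) = c *s Phi v" for c v
    unfolding Phi_def by (simp add: innerN_scale_left vec.scale_sum_right vector_smult_assoc)
  show ?thesis using iso adj inv1 J hom by blast
qed

definition Wop :: "(complex^'n \<Rightarrow> complex^'n) \<Rightarrow> (int \<Rightarrow> complex^'n) \<Rightarrow> int \<Rightarrow> complex^'n" where
  "Wop Phi x k = (if k = 1 then Phi (x 0) else x (k - 1))"

definition mkT :: "(complex^'n \<Rightarrow> complex^'n) \<Rightarrow> (int \<Rightarrow> complex^'n) \<Rightarrow> (int \<Rightarrow> complex^'n) \<times> (int \<Rightarrow> complex^'n)" where
  "mkT Phi x = ((\<lambda>k. Wop Phi x k - x k), (\<lambda>k. \<i> *s (Wop Phi x k + x k)))"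

definition Tg :: "(complex^'n \<Rightarrow> complex^'n) \<Rightarrow> ((int \<Rightarrow> complex^'n) \<times> (int \<Rightarrow> complex^'n)) set" where
  "Tg Phi = {mkT Phi x | x. x \<in> l2Z}"

lemma S_mk: assumes "x 0 = 0" "Phi 0 = 0"
  shows "mkT Phi x = ((\<lambda>k. x (k - 1) - x k), (\<lambda>k. \<i> *s (x (k - 1) + x k)))"
proof -
  have "Wop Phi x k = x (k - 1)" for k using assms by (simp add: Wop_def)
  thus ?thesis by (simp add: mkT_def)
qed

lemma S_graph_eq: assumes "Phi 0 = 0"
  shows "S_graph = {mkT Phi x | x. x \<in> l2Z \<and> x 0 = 0}"
proof -
  have "mkT Phi x = ((\<lambda>k. x (k - 1) - x k), (\<lambda>k. \<i> *s (x (k - 1) + x k)))" if "x 0 = 0" for x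
    by (rule S_mk[where Phi=Phi and x=x, OF that assms])
  thus ?thesis unfolding S_graph_def by force
qed

lemma Wop_l2: assumes "x \<in> l2Z" "\<And>v. norm (Phi v) = norm v" shows "Wop Phi x \<in> l2Z"
proof -
  have "(\<lambda>k. if k = 1 then Phi (x 0) else x (k + -1)) \<in> l2Z"
    by (rule l2_update[OF l2_shift[OF assms(1)]])
  thus ?thesis unfolding Wop_def[abs_def] diff_conv_add_uminus .
qed

lemma mkT_l2: assumes "x \<in> l2Z" "\<And>v. norm (Phi v) = norm v"
  shows "fst (mkT Phi x) \<in> l2Z" "snd (mkT Phi x) \<in> l2Z"
  using l2_diff[OF Wop_l2[OF assms] assms(1)] l2_scale[OF l2_add[OF Wop_l2[OF assms] assms(1)]]
  by (auto simp: mkT_def)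

lemma Wop_delta: assumes "Phi 0 = 0"
  shows "Wop Phi (\<lambda>k. if k = m then v else 0) = (\<lambda>k. if k = m + 1 then (if m = 0 then Phi v else v) else 0)"
  using assms by (auto simp: Wop_def fun_eq_iff)

lemma test_delta:
  assumes "Phi 0 = 0"
    and "l2_inner (snd (mkT Phi (\<lambda>k. if k = m then v else 0))) g = l2_inner (fst (mkT Phi (\<lambda>k. if k = m then v else 0))) h"
  shows "innerN v (h m - \<i> *s g m) = innerN (if m = 0 then Phi v else v) (h (m + 1) + \<i> *s g (m + 1))"
proof -
  define w where "w = (if m = 0 then Phi v else v)"
  have ne: "m + 1 \<noteq> m" by simp
  have f: "fst (mkT Phi (\<lambda>k. if k = m then v else 0)) = (\<lambda>k. (if k = m + 1 then w else 0) - (if k = m then v else 0))"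
    unfolding w_def mkT_def fst_conv snd_conv Wop_delta[where Phi=Phi, OF assms(1)] ..
  have s: "snd (mkT Phi (\<lambda>k. if k = m then v else 0)) = (\<lambda>k. \<i> *s ((if k = m + 1 then w else 0) + (if k = m then v else 0)))"
    unfolding w_def mkT_def fst_conv snd_conv Wop_delta[where Phi=Phi, OF assms(1)] ..
  have "l2_inner (snd (mkT Phi (\<lambda>k. if k = m then v else 0))) g
      = (\<Sum>k\<in>{m, m+1}. innerN (\<i> *s ((if k = m + 1 then w else 0) + (if k = m then v else 0))) (g k))"
    unfolding s by (rule l2_inner_finite) auto
  also have "\<dots> = \<i> * innerN v (g m) + \<i> * innerN w (g (m + 1))"
    using ne by (simp add: innerN_scale_left)
  finally have e1: "l2_inner (snd (mkT Phi (\<lambda>k. if k = m then v else 0))) g = \<i> * innerN v (g m) + \<i> * innerN w (g (m + 1))" .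
  have "l2_inner (fst (mkT Phi (\<lambda>k. if k = m then v else 0))) h
      = (\<Sum>k\<in>{m, m+1}. innerN ((if k = m + 1 then w else 0) - (if k = m then v else 0)) (h k))"
    unfolding f by (rule l2_inner_finite) auto
  also have "\<dots> = - innerN v (h m) + innerN w (h (m + 1))"
    using ne by (simp add: innerN_minus_left)
  finally have e2: "l2_inner (fst (mkT Phi (\<lambda>k. if k = m then v else 0))) h = - innerN v (h m) + innerN w (h (m + 1))" .
  have eq: "\<i> * innerN v (g m) + \<i> * innerN w (g (m + 1)) = - innerN v (h m) + innerN w (h (m + 1))"
    using assms(2) e1 e2 by simp
  have "innerN v (h m - \<i> *s g m) = innerN v (h m) + \<i> * innerN v (g m)"
    by (simp add: innerN_diff_right innerN_scale_right)
  also have "\<dots> = innerN w (h (m + 1)) - \<i> * innerN w (g (m + 1))"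
    using eq by (simp add: algebra_simps)
  also have "\<dots> = innerN w (h (m + 1) + \<i> *s g (m + 1))"
    by (simp add: innerN_add_right innerN_scale_right)
  finally show ?thesis by (simp add: w_def)
qed

lemma diff_swap: "(a::'a::ab_group_add) - b = c - d \<Longrightarrow> a - c = b - d"
proof -
  assume h: "a - b = c - d"
  have "a - c = (a - b) - (c - b)" by simp
  also have "\<dots> = (c - d) - (c - b)" using h by simp
  also have "\<dots> = b - d" by simp
  finally show ?thesis .
qed

lemma const_down: assumes "\<And>k. k \<le> a \<Longrightarrow> d (k - 1) = d k" shows "k \<le> (a::int) \<Longrightarrow> d k = d a"
proof -
  have "d (a - int n) = d a" for n
  proof (induction n)
    case (Suc n)
    have "d (a - int n - 1) = d (a - int n)" by (rule assms) simp
    thus ?case using Suc by (simp add: algebra_simps)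
  qed simp
  moreover assume "k \<le> a"
  hence "k = a - int (nat (a - k))" by simp
  ultimately show ?thesis by metis
qed

lemma const_up: assumes "\<And>k. k > a \<Longrightarrow> d (k - 1) = d k" shows "k \<ge> (a::int) \<Longrightarrow> d k = d a"
proof -
  have "d (a + int n) = d a" for n
  proof (induction n)
    case (Suc n)
    have "d (a + int n + 1 - 1) = d (a + int n + 1)" by (rule assms) simp
    thus ?case using Suc by (simp add: algebra_simps)
  qed simp
  moreover assume "k \<ge> a"
  hence "k = a + int (nat (k - a))" by simp
  ultimately show ?thesis by metis
qed

lemma mkT_inj: assumes "x \<in> l2Z" "x' \<in> l2Z" "fst (mkT Phi x) = fst (mkT Phi x')"
  shows "x = x'"
proof -
  define d where "d k = x k - x' k" for k
  have dl2: "d \<in> l2Z" using l2_diff[OF assms(1,2)] by (simp add: d_def[abs_def])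
  have step: "d (k - 1) = d k" if "k \<noteq> 1" for k
  proof -
    have "Wop Phi x k - x k = Wop Phi x' k - x' k" using assms(3) by (simp add: mkT_def fun_eq_iff)
    hence "x (k - 1) - x k = x' (k - 1) - x' k" using that by (simp add: Wop_def)
    thus ?thesis unfolding d_def by (rule diff_swap)
  qed
  have s0: "d (k - 1) = d k" if "k \<le> 0" for k by (rule step) (use that in simp)
  have s1: "d (k - 1) = d k" if "k > 1" for k by (rule step) (use that in simp)
  have lo: "d k = d 0" if "k \<le> 0" for k by (rule const_down[where a=0 and d=d, OF s0 that])
  have hi: "d k = d 1" if "k \<ge> 1" for k by (rule const_up[where a=1 and d=d, OF s1 that])
  have "d 0 = 0"
  proof (rule l2_const_zero[OF dl2])
    show "d j = d 0" if "j \<in> {..0}" for j by (rule lo) (use that in simp)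
    show "infinite {..0::int}" by (rule infinite_Iic)
  qed
  moreover have "d 1 = 0"
  proof (rule l2_const_zero[OF dl2])
    show "d j = d 1" if "j \<in> {1..}" for j by (rule hi) (use that in simp)
    show "infinite {1::int..}" by (rule infinite_Ici)
  qed
  ultimately have "d k = 0" for k
  proof (cases "k \<le> 0")
    case True thus ?thesis using lo[OF True] \<open>d 0 = 0\<close> by simp
  next
    case False thus ?thesis using hi[of k] \<open>d 1 = 0\<close> by simp
  qed
  thus ?thesis by (auto simp: d_def fun_eq_iff)
qed

lemma iso_norm: assumes "\<And>a b. innerN (Phi a) (Phi b) = innerN a b" shows "norm (Phi v) = norm v"
proof -
  have "complex_of_real ((norm (Phi v))^2) = complex_of_real ((norm v)^2)"
    using assms[of v v] unfolding innerN_self .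
  hence "(norm (Phi v))^2 = (norm v)^2" by (simp only: of_real_eq_iff)
  thus ?thesis by (simp add: power2_eq_iff_nonneg)
qed

lemma W_inner: assumes "\<And>a b. innerN (Phi a) (Phi b) = innerN a b"
  shows "l2_inner (Wop Phi y) (Wop Phi x) = l2_inner y x"
proof -
  have "innerN (Wop Phi y k) (Wop Phi x k) = innerN (y (k - 1)) (x (k - 1))" for k
    using assms by (simp add: Wop_def)
  hence "l2_inner (Wop Phi y) (Wop Phi x) = l2_inner (\<lambda>k. y (k - 1)) (\<lambda>k. x (k - 1))"
    unfolding l2_inner_def by simp
  thus ?thesis by (simp add: l2_inner_shift)
qed

lemma expand1: assumes "a \<in> l2Z" "b \<in> l2Z" "c \<in> l2Z" "d \<in> l2Z"
  shows "l2_inner (\<lambda>k. \<i> *s (a k + b k)) (\<lambda>k. c k - d k)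
    = \<i> * (l2_inner a c - l2_inner a d + l2_inner b c - l2_inner b d)"
proof -
  have cd: "(\<lambda>k. c k - d k) \<in> l2Z" by (rule l2_diff[OF assms(3,4)])
  have "l2_inner (\<lambda>k. \<i> *s (a k + b k)) (\<lambda>k. c k - d k) = \<i> * l2_inner (\<lambda>k. a k + b k) (\<lambda>k. c k - d k)"
    by (rule l2_inner_scale_left)
  also have "l2_inner (\<lambda>k. a k + b k) (\<lambda>k. c k - d k) = l2_inner a (\<lambda>k. c k - d k) + l2_inner b (\<lambda>k. c k - d k)"
    by (rule l2_inner_add_left[OF cd assms(1,2)])
  also have "l2_inner a (\<lambda>k. c k - d k) = l2_inner a c - l2_inner a d"
    by (rule l2_inner_diff_right[OF assms(1,3,4)])
  also have "l2_inner b (\<lambda>k. c k - d k) = l2_inner b c - l2_inner b d"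
    by (rule l2_inner_diff_right[OF assms(2,3,4)])
  finally show ?thesis by (simp add: algebra_simps)
qed

lemma expand2: assumes "a \<in> l2Z" "b \<in> l2Z" "c \<in> l2Z" "d \<in> l2Z"
  shows "l2_inner (\<lambda>k. a k - b k) (\<lambda>k. \<i> *s (c k + d k))
    = - \<i> * (l2_inner a c + l2_inner a d - l2_inner b c - l2_inner b d)"
proof -
  have cd: "(\<lambda>k. c k + d k) \<in> l2Z" by (rule l2_add[OF assms(3,4)])
  have "l2_inner (\<lambda>k. a k - b k) (\<lambda>k. \<i> *s (c k + d k)) = cnj \<i> * l2_inner (\<lambda>k. a k - b k) (\<lambda>k. c k + d k)"
    by (rule l2_inner_scale_right)
  also have "l2_inner (\<lambda>k. a k - b k) (\<lambda>k. c k + d k) = l2_inner a (\<lambda>k. c k + d k) - l2_inner b (\<lambda>k. c k + d k)"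
    by (rule l2_inner_diff_left[OF cd assms(1,2)])
  also have "l2_inner a (\<lambda>k. c k + d k) = l2_inner a c + l2_inner a d"
    by (rule l2_inner_add_right[OF assms(1,3,4)])
  also have "l2_inner b (\<lambda>k. c k + d k) = l2_inner b c + l2_inner b d"
    by (rule l2_inner_add_right[OF assms(2,3,4)])
  finally show ?thesis by (simp add: algebra_simps)
qed

lemma aux1: "(- \<i>/2) * (a + \<i> * b) - (- \<i>/2) * (a - \<i> * b) = (b::complex)"
  by (simp add: field_simps)
lemma aux2: "\<i> * ((- \<i>/2) * (a + \<i> * b) + (- \<i>/2) * (a - \<i> * b)) = (a::complex)"
  by (simp add: field_simps)
lemma Jop_alt: "J_op Jm Jp x k = (if k \<le> 0 then Jm else Jp) *v x k"
  by (simp add: J_op_def)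

lemma back_dir:
  fixes Jm Jp :: "complex^'n^'n" and Phi Phis :: "complex^'n \<Rightarrow> complex^'n"
  assumes iso: "\<And>a b. innerN (Phi a) (Phi b) = innerN a b"
    and adj: "\<And>v p. innerN (Phi v) p = innerN v (Phis p)"
    and inv: "\<And>p. Phi (Phis p) = p"
    and J: "\<And>v. Phi (Jm *v v) = Jp *v Phi v"
    and hom: "\<And>c v. Phi (c *s v) = c *s Phi v"
    and Jm: "fund_sym_N Jm" and Jp: "fund_sym_N Jp"
  shows "S_graph \<subseteq> Tg Phi \<and> self_adjoint_graph (Tg Phi) \<and> commutes_graph (J_op Jm Jp) (Tg Phi)"
proof -
  have P0: "Phi 0 = 0" using hom[of 0 0] by simp
  have nrm: "norm (Phi v) = norm v" for v by (rule iso_norm[OF iso])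
  have sub: "S_graph \<subseteq> Tg Phi" unfolding S_graph_eq[where Phi=Phi, OF P0] Tg_def by blast
  have sv: "single_valued_graph (Tg Phi)"
    unfolding single_valued_graph_def Tg_def
  proof (intro allI impI)
    fix f g g'
    assume "(f, g) \<in> {mkT Phi x |x. x \<in> l2Z}" "(f, g') \<in> {mkT Phi x |x. x \<in> l2Z}"
    then obtain x x' where x: "x \<in> l2Z" "(f, g) = mkT Phi x" and x': "x' \<in> l2Z" "(f, g') = mkT Phi x'"
      by blast
    have "fst (mkT Phi x) = fst (mkT Phi x')" using x x' by (metis fst_conv)
    hence "x = x'" by (rule mkT_inj[OF x(1) x'(1)])
    thus "g = g'" using x x' by (metis snd_conv)
  qed
  have le1: "Tg Phi \<subseteq> adjoint_graph (Tg Phi)"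
  proof
    fix p assume "p \<in> Tg Phi"
    then obtain x where x: "x \<in> l2Z" "p = mkT Phi x" by (auto simp: Tg_def)
    have Wx: "Wop Phi x \<in> l2Z" by (rule Wop_l2[where Phi=Phi, OF x(1) nrm])
    have "l2_inner Tf (fst p) = l2_inner f (snd p)" if T: "(f, Tf) \<in> Tg Phi" for f Tf
    proof -
      obtain y where y: "y \<in> l2Z" "(f, Tf) = mkT Phi y" using T by (auto simp: Tg_def)
      have Wy: "Wop Phi y \<in> l2Z" by (rule Wop_l2[where Phi=Phi, OF y(1) nrm])
      have "l2_inner Tf (fst p) = l2_inner (\<lambda>k. \<i> *s (Wop Phi y k + y k)) (\<lambda>k. Wop Phi x k - x k)"
        using x y by (simp add: mkT_def)
      also have "\<dots> = \<i> * (l2_inner (Wop Phi y) (Wop Phi x) - l2_inner (Wop Phi y) x + l2_inner y (Wop Phi x) - l2_inner y x)"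
        by (rule expand1[OF Wy y(1) Wx x(1)])
      also have "\<dots> = - \<i> * (l2_inner (Wop Phi y) (Wop Phi x) + l2_inner (Wop Phi y) x - l2_inner y (Wop Phi x) - l2_inner y x)"
        using W_inner[OF iso, of y x] by (simp add: algebra_simps)
      also have "\<dots> = l2_inner (\<lambda>k. Wop Phi y k - y k) (\<lambda>k. \<i> *s (Wop Phi x k + x k))"
        by (rule expand2[OF Wy y(1) Wx x(1), symmetric])
      also have "\<dots> = l2_inner f (snd p)" using x y by (simp add: mkT_def)
      finally show ?thesis .
    qed
    moreover have "fst p \<in> l2Z" "snd p \<in> l2Z" using mkT_l2[where Phi=Phi, OF x(1) nrm] x(2) by auto
    ultimately show "p \<in> adjoint_graph (Tg Phi)" unfolding adjoint_graph_def
      by (cases p) auto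
  qed
  have le2: "adjoint_graph (Tg Phi) \<subseteq> Tg Phi"
  proof
    fix p assume "p \<in> adjoint_graph (Tg Phi)"
    then obtain g h where p: "p = (g, h)" "g \<in> l2Z" "h \<in> l2Z"
      and adb: "\<forall>(f, Tf) \<in> Tg Phi. l2_inner Tf g = l2_inner f h"
      unfolding adjoint_graph_def by auto
    have ad: "l2_inner Tf g = l2_inner f h" if "(f, Tf) \<in> Tg Phi" for f Tf
      using adb that by auto
    define P where "P k = h k + \<i> *s g k" for k
    define Q where "Q k = h k - \<i> *s g k" for k
    have tst: "innerN v (Q m) = innerN (if m = 0 then Phi v else v) (P (m + 1))" for m v
    proof -
      have "mkT Phi (\<lambda>k. if k = m then v else 0) \<in> Tg Phi"
        unfolding Tg_def using l2_delta[of m v] by blast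
      hence "l2_inner (snd (mkT Phi (\<lambda>k. if k = m then v else 0))) g = l2_inner (fst (mkT Phi (\<lambda>k. if k = m then v else 0))) h"
        using ad by (metis prod.collapse)
      from test_delta[where Phi=Phi, OF P0 this] show ?thesis by (simp add: P_def Q_def)
    qed
    have QP: "Q m = P (m + 1)" if "m \<noteq> 0" for m
      by (rule innerN_ext) (use tst[of v m for v] that in simp)
    have Q0: "Q 0 = Phis (P 1)"
      by (rule innerN_ext) (use tst[of v 0 for v] adj in simp)
    define x where "x k = (- \<i> / 2) *s Q k" for k
    have xl2: "x \<in> l2Z" unfolding x_def[abs_def] Q_def
      by (intro l2_scale l2_diff p l2_scale)
    have Wx: "Wop Phi x k = (- \<i> / 2) *s P k" for k
    proof (cases "k = 1")
      case True
      have "Wop Phi x k = Phi ((- \<i> / 2) *s Q 0)" using True by (simp add: Wop_def x_def)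
      also have "\<dots> = (- \<i> / 2) *s Phi (Q 0)" by (rule hom)
      also have "\<dots> = (- \<i> / 2) *s P k" using True by (simp only: Q0 inv)
      finally show ?thesis .
    next
      case False
      hence "Q (k - 1) = P k" using QP[of "k - 1"] by simp
      thus ?thesis using False by (simp add: Wop_def x_def)
    qed
    have fstq: "Wop Phi x k - x k = g k" for k
    proof -
      have "Wop Phi x k - x k = (- \<i> / 2) *s P k - (- \<i> / 2) *s Q k" by (simp only: Wx x_def)
      also have "\<dots> = g k"
        unfolding P_def Q_def vec_eq_iff vector_minus_component vector_add_component vector_smult_component aux1
        by simp
      finally show ?thesis .
    qed
    have sndq: "\<i> *s (Wop Phi x k + x k) = h k" for k
    proof -
      have "\<i> *s (Wop Phi x k + x k) = \<i> *s ((- \<i> / 2) *s P k + (- \<i> / 2) *s Q k)" by (simp only: Wx x_def)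
      also have "\<dots> = h k"
        unfolding P_def Q_def vec_eq_iff vector_minus_component vector_add_component vector_smult_component aux2
        by simp
      finally show ?thesis .
    qed
    have "mkT Phi x = (g, h)" unfolding mkT_def fstq sndq by (rule refl)
    hence "p = mkT Phi x" using p(1) by simp
    thus "p \<in> Tg Phi" using xl2 unfolding Tg_def by (intro CollectI exI[of _ x]) simp
  qed
  have com: "commutes_graph (J_op Jm Jp) (Tg Phi)"
    unfolding commutes_graph_def
  proof (intro ballI, clarify)
    fix u v assume "(u, v) \<in> Tg Phi"
    then obtain x where x: "x \<in> l2Z" "(u, v) = mkT Phi x" by (auto simp: Tg_def)
    define y where "y = J_op Jm Jp x"
    have yl2: "y \<in> l2Z" by (rule l2_le[OF x(1), of _ 1]) (simp add: y_def J_op_def fs_norm[OF Jm] fs_norm[OF Jp])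
    have Wy: "Wop Phi y k = (if k \<le> 0 then Jm else Jp) *v Wop Phi x k" for k
    proof (cases "k = 1")
      case True thus ?thesis by (simp add: Wop_def y_def J_op_def J)
    next
      case False
      hence "(k - 1 \<le> 0) = (k \<le> 0)" by arith
      thus ?thesis using False by (simp add: Wop_def y_def Jop_alt)
    qed
    have yk: "y k = (if k \<le> 0 then Jm else Jp) *v x k" for k by (simp add: y_def Jop_alt)
    have u: "u = (\<lambda>k. Wop Phi x k - x k)" and v: "v = (\<lambda>k. \<i> *s (Wop Phi x k + x k))"
      using x(2) by (simp_all add: mkT_def)
    have "J_op Jm Jp u = (\<lambda>k. Wop Phi y k - y k)"
      unfolding u by (rule ext) (simp only: Jop_alt vec.diff Wy yk)
    moreover have "J_op Jm Jp v = (\<lambda>k. \<i> *s (Wop Phi y k + y k))"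
      unfolding v by (rule ext) (simp only: Jop_alt vec.add vector_scalar_commute Wy yk)
    ultimately have "(J_op Jm Jp u, J_op Jm Jp v) = mkT Phi y" by (simp add: mkT_def)
    thus "(J_op Jm Jp u, J_op Jm Jp v) \<in> Tg Phi" using yl2 unfolding Tg_def by blast
  qed
  show ?thesis using sub sv le1 le2 com unfolding self_adjoint_graph_def by blast
qed

lemma V0a: "(G::complex^'n) - (- \<i>/2) *s (H + \<i> *s G) = - ((- \<i>/2) *s (H - \<i> *s G))"
  by (simp add: vec_eq_iff field_simps)
lemma V0b: "(H::complex^'n) - \<i> *s ((- \<i>/2) *s (H + \<i> *s G)) = \<i> *s ((- \<i>/2) *s (H - \<i> *s G))"
  by (simp add: vec_eq_iff field_simps)
lemma V1a: "(G::complex^'n) - (0 - (- \<i>/2) *s (H - \<i> *s G)) = (- \<i>/2) *s (H + \<i> *s G)"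
  by (simp add: vec_eq_iff field_simps)
lemma V1b: "(H::complex^'n) - \<i> *s (0 + (- \<i>/2) *s (H - \<i> *s G)) = \<i> *s ((- \<i>/2) *s (H + \<i> *s G))"
  by (simp add: vec_eq_iff field_simps)
lemma V2a: "(G::complex^'n) - ((- \<i>/2) *s (H + \<i> *s G) - (- \<i>/2) *s (H - \<i> *s G)) = 0"
  by (simp add: vec_eq_iff field_simps)
lemma V2b: "(H::complex^'n) - \<i> *s ((- \<i>/2) *s (H + \<i> *s G) + (- \<i>/2) *s (H - \<i> *s G)) = 0"
  by (simp add: vec_eq_iff field_simps)

definition Eel :: "complex^'n \<Rightarrow> complex^'n \<Rightarrow> (int \<Rightarrow> complex^'n) \<times> (int \<Rightarrow> complex^'n)" where
  "Eel a b = ((\<lambda>k. (if k = 1 then a else 0) - (if k = 0 then b else 0)),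
              (\<lambda>k. \<i> *s ((if k = 1 then a else 0) + (if k = 0 then b else 0))))"

lemma Eel_l2: "fst (Eel a b) \<in> l2Z" "snd (Eel a b) \<in> l2Z"
  by (auto simp: Eel_def split: if_splits intro!: l2_finite[of "{0,1}"])

lemma S_mk_id: "S_graph = {mkT id x | x. x \<in> l2Z \<and> x 0 = 0}"
  by (rule S_graph_eq) simp

lemma fwd_dir:
  fixes Jm Jp :: "complex^'n^'n" and T :: "((int \<Rightarrow> complex^'n) \<times> (int \<Rightarrow> complex^'n)) set"
  assumes ST: "S_graph \<subseteq> T" and sa: "T = adjoint_graph T" and com: "commutes_graph (J_op Jm Jp) T"
    and Jm: "fund_sym_N Jm" and Jp: "fund_sym_N Jp"
  shows "vec.dim {u. Jp *v u = - u} = vec.dim {u. Jm *v u = - u}"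
proof -
  have aT: "adjoint_graph T = T" using sa by simp
  have inT: "p \<in> T \<longleftrightarrow> fst p \<in> l2Z \<and> snd p \<in> l2Z \<and> (\<forall>(f, Tf)\<in>T. l2_inner Tf (fst p) = l2_inner f (snd p))" for p
  proof -
    have "p \<in> adjoint_graph T \<longleftrightarrow> fst p \<in> l2Z \<and> snd p \<in> l2Z \<and> (\<forall>(f, Tf)\<in>T. l2_inner Tf (fst p) = l2_inner f (snd p))"
      by (cases p) (simp add: adjoint_graph_def)
    thus ?thesis unfolding aT .
  qed
  have l2T: "fst p \<in> l2Z" "snd p \<in> l2Z" if "p \<in> T" for p using inT[THEN iffD1, OF that] by auto
  have adT: "l2_inner Tf g = l2_inner f h" if "(f, Tf) \<in> T" "(g, h) \<in> T" for f Tf g h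
  proof -
    have "\<forall>(f, Tf)\<in>T. l2_inner Tf g = l2_inner f h" using inT[THEN iffD1, OF that(2)] by simp
    thus ?thesis using that(1) by blast
  qed
  have addT: "(\<lambda>k. g k + g' k, \<lambda>k. h k + h' k) \<in> T" if "(g, h) \<in> T" "(g', h') \<in> T" for g h g' h'
  proof -
    have l: "g \<in> l2Z" "h \<in> l2Z" "g' \<in> l2Z" "h' \<in> l2Z" using l2T[OF that(1)] l2T[OF that(2)] by auto
    have "l2_inner Tf (\<lambda>k. g k + g' k) = l2_inner f (\<lambda>k. h k + h' k)" if "(f, Tf) \<in> T" for f Tf
    proof -
      have "f \<in> l2Z" "Tf \<in> l2Z" using l2T[OF that] by auto
      thus ?thesis using adT[OF that \<open>(g, h) \<in> T\<close>] adT[OF that \<open>(g', h') \<in> T\<close>] l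
        by (simp add: l2_inner_add_right)
    qed
    thus ?thesis using l l2_add[OF l(1,3)] l2_add[OF l(2,4)] by (intro inT[THEN iffD2]) auto
  qed
  have scT: "(\<lambda>k. c *s g k, \<lambda>k. c *s h k) \<in> T" if "(g, h) \<in> T" for c g h
  proof -
    have l: "g \<in> l2Z" "h \<in> l2Z" using l2T[OF that] by auto
    have "l2_inner Tf (\<lambda>k. c *s g k) = l2_inner f (\<lambda>k. c *s h k)" if "(f, Tf) \<in> T" for f Tf
      using adT[OF that \<open>(g, h) \<in> T\<close>] by (simp add: l2_inner_scale_right)
    thus ?thesis using l2_scale[OF l(1)] l2_scale[OF l(2)] by (intro inT[THEN iffD2]) auto
  qed
  have diffT: "(\<lambda>k. g k - g' k, \<lambda>k. h k - h' k) \<in> T" if "(g, h) \<in> T" "(g', h') \<in> T" for g h g' h'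
    using addT[OF that(1) scT[OF that(2), of "-1"]] by (simp add: vector_smult_lneg)
  have QP: "h m - \<i> *s g m = h (m + 1) + \<i> *s g (m + 1)" if "(g, h) \<in> T" "m \<noteq> 0" for g h m
  proof (rule innerN_ext)
    fix v :: "complex^'n"
    have "mkT id (\<lambda>k. if k = m then v else 0) \<in> S_graph"
      unfolding S_mk_id using l2_delta[of m v] that(2) by auto
    hence "mkT id (\<lambda>k. if k = m then v else 0) \<in> T" using ST by blast
    hence "l2_inner (snd (mkT id (\<lambda>k. if k = m then v else 0))) g = l2_inner (fst (mkT id (\<lambda>k. if k = m then v else 0))) h"
      using adT[OF _ that(1)] by (metis prod.collapse)
    from test_delta[where Phi=id, OF _ this] show "innerN v (h m - \<i> *s g m) = innerN v (h (m + 1) + \<i> *s g (m + 1))"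
      by simp
  qed
  have bd: "Eel ((- \<i>/2) *s (h 1 + \<i> *s g 1)) ((- \<i>/2) *s (h 0 - \<i> *s g 0)) \<in> T" if gh: "(g, h) \<in> T" for g h
  proof -
    define Q where "Q k = h k - \<i> *s g k" for k
    define x where "x k = (if k = 0 then 0 else (- \<i>/2) *s Q k)" for k
    have gl: "g \<in> l2Z" "h \<in> l2Z" using l2T[OF gh] by auto
    have xl2: "x \<in> l2Z" unfolding x_def[abs_def] Q_def
      by (intro l2_update l2_scale l2_diff gl)
    have x0: "x 0 = 0" by (simp add: x_def)
    have "mkT id x \<in> T" using ST xl2 x0 unfolding S_mk_id by blast
    hence "(\<lambda>k. g k - (x (k - 1) - x k), \<lambda>k. h k - \<i> *s (x (k - 1) + x k)) \<in> T"
      using diffT[OF gh, of "\<lambda>k. x (k - 1) - x k" "\<lambda>k. \<i> *s (x (k - 1) + x k)"] S_mk[of x id] x0 by simp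
    moreover have "(\<lambda>k. g k - (x (k - 1) - x k), \<lambda>k. h k - \<i> *s (x (k - 1) + x k))
       = Eel ((- \<i>/2) *s (h 1 + \<i> *s g 1)) ((- \<i>/2) *s (h 0 - \<i> *s g 0))"
    proof -
      have c: "g k - (x (k - 1) - x k) = (if k = 1 then (- \<i>/2) *s (h 1 + \<i> *s g 1) else 0) - (if k = 0 then (- \<i>/2) *s (h 0 - \<i> *s g 0) else 0)
           \<and> h k - \<i> *s (x (k - 1) + x k) = \<i> *s ((if k = 1 then (- \<i>/2) *s (h 1 + \<i> *s g 1) else 0) + (if k = 0 then (- \<i>/2) *s (h 0 - \<i> *s g 0) else 0))" for k
      proof (cases "k = 0")
        case True
        have "Q (-1) = h 0 + \<i> *s g 0" using QP[OF gh, of "-1"] by (simp add: Q_def)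
        hence xm: "x (-1) = (- \<i>/2) *s (h 0 + \<i> *s g 0)" by (simp add: x_def)
        show ?thesis using True xm x0 V0a[of "g 0" "h 0"] V0b[of "h 0" "g 0"] by simp
      next
        case False
        show ?thesis
        proof (cases "k = 1")
          case True
          thus ?thesis using x0 V1a[of "g 1" "h 1"] V1b[of "h 1" "g 1"] by (simp add: x_def Q_def)
        next
          case False2: False
          have "Q (k - 1) = h k + \<i> *s g k" using QP[OF gh, of "k - 1"] False2 by (simp add: Q_def)
          hence "x (k - 1) = (- \<i>/2) *s (h k + \<i> *s g k)" using False2 by (simp add: x_def)
          thus ?thesis using False False2 V2a[of "g k" "h k"] V2b[of "h k" "g k"] by (simp add: x_def Q_def)
        qed
      qed
      show ?thesis unfolding Eel_def using c by (simp add: fun_eq_iff)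
    qed
    ultimately show ?thesis by simp
  qed
  define G where "G = {(a, b). Eel a b \<in> T}"
  have bdG: "((- \<i>/2) *s (h 1 + \<i> *s g 1), (- \<i>/2) *s (h 0 - \<i> *s g 0)) \<in> G" if "(g, h) \<in> T" for g h
    using bd[OF that] by (simp add: G_def)
  have iso0: "innerN a' a = innerN b' b" if "(a, b) \<in> G" "(a', b') \<in> G" for a b a' b'
  proof -
    have e: "Eel a b \<in> T" "Eel a' b' \<in> T" using that by (auto simp: G_def)
    have "l2_inner (snd (Eel a' b')) (fst (Eel a b)) = l2_inner (fst (Eel a' b')) (snd (Eel a b))"
      using adT[of "fst (Eel a' b')" "snd (Eel a' b')" "fst (Eel a b)" "snd (Eel a b)"] e by simp
    moreover have "l2_inner (snd (Eel a' b')) (fst (Eel a b)) = \<i> * innerN a' a - \<i> * innerN b' b"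
      by (subst l2_inner_finite[of "{0,1}"]) (auto simp: Eel_def innerN_scale_left innerN_minus_right)
    moreover have "l2_inner (fst (Eel a' b')) (snd (Eel a b)) = - \<i> * innerN a' a + \<i> * innerN b' b"
      by (subst l2_inner_finite[of "{0,1}"]) (auto simp: Eel_def innerN_scale_right innerN_minus_left)
    ultimately have "2 * \<i> * innerN a' a = 2 * \<i> * innerN b' b" by (simp add: algebra_simps)
    thus ?thesis by simp
  qed
  have addG: "(a + a', b + b') \<in> G" if "(a, b) \<in> G" "(a', b') \<in> G" for a b a' b'
  proof -
    have "Eel (a + a') (b + b') = (\<lambda>k. fst (Eel a b) k + fst (Eel a' b') k, \<lambda>k. snd (Eel a b) k + snd (Eel a' b') k)"
      unfolding Eel_def prod.inject fun_eq_iff fst_conv snd_conv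
      apply (intro conjI allI)
      subgoal for k by (cases "k = 0"; cases "k = 1") (simp_all add: )
      subgoal for k by (cases "k = 0"; cases "k = 1") (simp_all add: vec.scale_right_distrib)
      done
    thus ?thesis using addT[of "fst (Eel a b)" "snd (Eel a b)" "fst (Eel a' b')" "snd (Eel a' b')"] that
      by (simp add: G_def)
  qed
  have scG: "(c *s a, c *s b) \<in> G" if "(a, b) \<in> G" for c a b
  proof -
    have "Eel (c *s a) (c *s b) = (\<lambda>k. c *s fst (Eel a b) k, \<lambda>k. c *s snd (Eel a b) k)"
      unfolding Eel_def prod.inject fun_eq_iff fst_conv snd_conv
      apply (intro conjI allI)
      subgoal for k by (cases "k = 0"; cases "k = 1") (simp_all add: vector_smult_rneg vec.scale_right_diff_distrib)
      subgoal for k by (cases "k = 0"; cases "k = 1") (simp_all add: vector_smult_assoc mult.commute)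
      done
    thus ?thesis using scT[of "fst (Eel a b)" "snd (Eel a b)" c] that by (simp add: G_def)
  qed
  have diffG: "(a - a', b - b') \<in> G" if "(a, b) \<in> G" "(a', b') \<in> G" for a b a' b'
    using addG[OF that(1) scG[OF that(2), of "-1"]] by (simp add: vector_smult_lneg)
  have zG: "(0, 0) \<in> G"
  proof -
    have "mkT id (\<lambda>k. 0) \<in> T" using ST l2_zero unfolding S_mk_id by blast
    moreover have "mkT id (\<lambda>k. 0) = Eel 0 0" by (simp add: mkT_def Eel_def Wop_def fun_eq_iff)
    ultimately have "Eel 0 0 \<in> T" by metis
    thus ?thesis by (simp add: G_def)
  qed
  have maxG: "a = 0" if "\<And>a' b'. (a', b') \<in> G \<Longrightarrow> innerN a a' = 0" for a
  proof -
    have "Eel a 0 \<in> T"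
    proof (rule inT[THEN iffD2], intro conjI Eel_l2 ballI, clarify)
      fix f Tf assume fT: "(f, Tf) \<in> T"
      have "innerN a ((- \<i>/2) *s (Tf 1 + \<i> *s f 1)) = 0" using that bdG[OF fT] by blast
      hence "cnj (- \<i>/2) * innerN a (Tf 1 + \<i> *s f 1) = 0" by (simp only: innerN_scale_right)
      hence "innerN a (Tf 1 + \<i> *s f 1) = 0" by simp
      hence "innerN (Tf 1 + \<i> *s f 1) a = 0" using innerN_cnj[of a "Tf 1 + \<i> *s f 1"] by simp
      hence h: "innerN (Tf 1) a + \<i> * innerN (f 1) a = 0" by (simp add: innerN_add_left innerN_scale_left)
      have "l2_inner Tf (fst (Eel a 0)) = innerN (Tf 1) a"
        by (subst l2_inner_finite[of "{1}"]) (auto simp: Eel_def)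
      moreover have "l2_inner f (snd (Eel a 0)) = - \<i> * innerN (f 1) a"
        by (subst l2_inner_finite[of "{1}"]) (auto simp: Eel_def innerN_scale_right)
      moreover have "innerN (Tf 1) a = - (\<i> * innerN (f 1) a)" using h by (simp only: eq_neg_iff_add_eq_0)
      ultimately show "l2_inner Tf (fst (Eel a 0)) = l2_inner f (snd (Eel a 0))" by simp
    qed
    hence "(a, 0) \<in> G" by (simp add: G_def)
    from iso0[OF this this] show ?thesis by simp
  qed
  have JG: "(Jp *v a, Jm *v b) \<in> G" if "(a, b) \<in> G" for a b
  proof -
    have "(J_op Jm Jp (fst (Eel a b)), J_op Jm Jp (snd (Eel a b))) \<in> T"
      using com that unfolding commutes_graph_def G_def by (cases "Eel a b") auto
    moreover have "(J_op Jm Jp (fst (Eel a b)), J_op Jm Jp (snd (Eel a b))) = Eel (Jp *v a) (Jm *v b)"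
      unfolding Eel_def prod.inject fun_eq_iff fst_conv snd_conv
      apply (intro conjI allI)
      subgoal for k by (cases "k = 0"; cases "k = 1") (simp_all add: J_op_def vec.diff vec.neg)
      subgoal for k by (cases "k = 0"; cases "k = 1") (simp_all add: J_op_def vec.add vector_scalar_commute)
      done
    ultimately show ?thesis by (simp add: G_def)
  qed
  \<comment> \<open>G is the graph of a linear bijection\<close>
  have uniq: "b = b'" if "(a, b) \<in> G" "(a, b') \<in> G" for a b b'
  proof -
    have "(0, b - b') \<in> G" using diffG[OF that] by simp
    from iso0[OF this this] show ?thesis by simp
  qed
  have domG: "fst ` G = UNIV"
  proof (rule perp_full)
    show "vec.subspace (fst ` G)" unfolding vec.subspace_def
    proof (intro conjI ballI allI)
      show "0 \<in> fst ` G" using zG by force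
      show "x + y \<in> fst ` G" if "x \<in> fst ` G" "y \<in> fst ` G" for x y
        using that addG by force
      show "c *s x \<in> fst ` G" if "x \<in> fst ` G" for c x
        using that scG by force
    qed
    show "a = 0" if "\<And>d. d \<in> fst ` G \<Longrightarrow> innerN a d = 0" for a
      by (rule maxG) (use that in force)
  qed
  define phi where "phi a = (SOME b. (a, b) \<in> G)" for a
  have phiG: "(a, phi a) \<in> G" for a
  proof -
    have "a \<in> fst ` G" using domG by simp
    then obtain p where p: "p \<in> G" "a = fst p" by auto
    hence "(a, snd p) \<in> G" by simp
    hence "\<exists>b. (a, b) \<in> G" by blast
    thus ?thesis unfolding phi_def by (rule someI_ex)
  qed
  have phi_eq: "phi a = b" if "(a, b) \<in> G" for a b using uniq[OF phiG that] .
  have lin: "Vector_Spaces.linear (*s) (*s) phi"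
    unfolding Vector_Spaces.linear_iff
  proof (intro conjI allI)
    show "vector_space ((*s) :: complex \<Rightarrow> complex^'n \<Rightarrow> complex^'n)" by (rule vec.vector_space_axioms)
    show "vector_space ((*s) :: complex \<Rightarrow> complex^'n \<Rightarrow> complex^'n)" by (rule vec.vector_space_axioms)
    show "phi (x + y) = phi x + phi y" for x y by (rule phi_eq[OF addG[OF phiG phiG]])
    show "phi (c *s x) = c *s phi x" for c x by (rule phi_eq[OF scG[OF phiG]])
  qed
  have inj: "inj phi"
  proof (rule injI)
    fix a a' assume "phi a = phi a'"
    hence "(a - a', 0) \<in> G" using diffG[OF phiG[of a] phiG[of a']] by simp
    from iso0[OF this this] show "a = a'" by simp
  qed
  have surj: "surj phi" by (rule vec.linear_inj_imp_surj[OF lin inj])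
  have phiJ: "phi (Jp *v a) = Jm *v phi a" for a by (rule phi_eq[OF JG[OF phiG]])
  have phim: "phi (- a) = - phi a" for a using phi_eq[OF scG[OF phiG, of "-1" a]] by (simp add: vector_smult_lneg)
  have img: "phi ` {u. Jp *v u = - u} = {u. Jm *v u = - u}"
  proof (intro set_eqI iffI)
    fix w assume "w \<in> phi ` {u. Jp *v u = - u}"
    then obtain u where "Jp *v u = - u" "w = phi u" by auto
    thus "w \<in> {u. Jm *v u = - u}" using phiJ[of u] phim[of u] by simp
  next
    fix w assume w: "w \<in> {u. Jm *v u = - u}"
    obtain u where u: "w = phi u" using surjD[OF surj, of w] by blast
    have "phi (Jp *v u) = phi (- u)" using phiJ[of u] phim[of u] w u by simp
    hence "Jp *v u = - u" using inj by (simp add: inj_eq)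
    thus "w \<in> phi ` {u. Jp *v u = - u}" using u by auto
  qed
  have injon: "inj_on phi (vec.span {u. Jp *v u = - u})" using inj by (rule inj_on_subset) simp
  have "vec.dim (phi ` {u. Jp *v u = - u}) = vec.dim {u. Jp *v u = - u}"
    by (rule vec.dim_image_eq[OF lin injon])
  thus ?thesis unfolding img by (rule sym)
qed

theorem corollary3p5:
  fixes Jm Jp :: "complex^'n^'n"
  assumes "fund_sym_N Jm" and "fund_sym_N Jp"
    and "commutes_graph (J_op Jm Jp) (S_graph :: ((int \<Rightarrow> complex^'n) \<times> (int \<Rightarrow> complex^'n)) set)"
  shows "(\<exists>T :: ((int \<Rightarrow> complex^'n) \<times> (int \<Rightarrow> complex^'n)) set.
            S_graph \<subseteq> T \<and> self_adjoint_graph T \<and> commutes_graph (J_op Jm Jp) T)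
         \<longleftrightarrow> vec.dim (range (\<lambda>v. (mat 1 - Jp) *v v)) = vec.dim (range (\<lambda>v. (mat 1 - Jm) *v v))"
proof -
  have rp: "range (\<lambda>v. (mat 1 - Jp) *v v) = {u. Jp *v u = - u}" by (rule range_minus[OF assms(2)])
  have rm: "range (\<lambda>v. (mat 1 - Jm) *v v) = {u. Jm *v u = - u}" by (rule range_minus[OF assms(1)])
  show ?thesis unfolding rp rm
  proof
    assume "\<exists>T :: ((int \<Rightarrow> complex^'n) \<times> (int \<Rightarrow> complex^'n)) set.
            S_graph \<subseteq> T \<and> self_adjoint_graph T \<and> commutes_graph (J_op Jm Jp) T"
    then obtain T :: "((int \<Rightarrow> complex^'n) \<times> (int \<Rightarrow> complex^'n)) set"
      where T: "S_graph \<subseteq> T" "self_adjoint_graph T" "commutes_graph (J_op Jm Jp) T" by blast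
    have "T = adjoint_graph T" using T(2) by (simp add: self_adjoint_graph_def)
    from fwd_dir[OF T(1) this T(3) assms(1,2)]
    show "vec.dim {u. Jp *v u = - u} = vec.dim {u. Jm *v u = - u}" .
  next
    assume d: "vec.dim {u. Jp *v u = - u} = vec.dim {u. Jm *v u = - u}"
    have ex: "\<exists>(Phi::complex^'n \<Rightarrow> complex^'n) Phis. (\<forall>a b. innerN (Phi a) (Phi b) = innerN a b)
     \<and> (\<forall>v p. innerN (Phi v) p = innerN v (Phis p)) \<and> (\<forall>p. Phi (Phis p) = p)
     \<and> (\<forall>v. Phi (Jm *v v) = Jp *v Phi v) \<and> (\<forall>c v. Phi (c *s v) = c *s Phi v)"
      by (rule exists_Phi[OF assms(1,2) d])
    then obtain Phi Phis :: "complex^'n \<Rightarrow> complex^'n" where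
      P: "(\<forall>a b. innerN (Phi a) (Phi b) = innerN a b)
     \<and> (\<forall>v p. innerN (Phi v) p = innerN v (Phis p)) \<and> (\<forall>p. Phi (Phis p) = p)
     \<and> (\<forall>v. Phi (Jm *v v) = Jp *v Phi v) \<and> (\<forall>c v. Phi (c *s v) = c *s Phi v)"
      by (elim exE)
    have i1: "\<And>a b. innerN (Phi a) (Phi b) = innerN a b" using P by blast
    have i2: "\<And>v p. innerN (Phi v) p = innerN v (Phis p)" using P by blast
    have i3: "\<And>p. Phi (Phis p) = p" using P by blast
    have i4: "\<And>v. Phi (Jm *v v) = Jp *v Phi v" using P by blast
    have i5: "\<And>c v. Phi (c *s v) = c *s Phi v" using P by blast
    have "S_graph \<subseteq> Tg Phi \<and> self_adjoint_graph (Tg Phi) \<and> commutes_graph (J_op Jm Jp) (Tg Phi)"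
      by (rule back_dir[OF i1 i2 i3 i4 i5 assms(1,2)])
    thus "\<exists>T :: ((int \<Rightarrow> complex^'n) \<times> (int \<Rightarrow> complex^'n)) set.
            S_graph \<subseteq> T \<and> self_adjoint_graph T \<and> commutes_graph (J_op Jm Jp) T" by blast
  qed
qed

end
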